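(* Let $\{a_n\}_{n\ge1}$ be a monotone decreasing sequence of positive real numbers. Suppose that for $n\ge 2$ \[ \frac{a_{2n}}{a_n}=\frac12-\frac{\beta}{\ln n}+\frac{\gamma(n)}{(\ln n)^p}, \] where $p>1$, $\beta$ is a real constant independent of $n$, and $\gamma(n)$ is a bounded function of $n$. Then: (i) if $\beta>\frac{\ln2}{2}$, then $\sum_{n=1}^\infty a_n$ converges; (ii) if $\beta\le\frac{\ln2}{2}$, then $\sum_{n=1}^\infty a_n$ diverges.
   Context: Here $\ln$ denotes the natural logarithm. *)

theory Defs
  imports "HOL-Analysis.Analysis"
begin

end

theory Submission
  imports Defs "HOL-Real_Asymp.Real_Asymp"
begin

lemma not_summable_bertrand:
  "\<not> summable (\<lambda>n. inverse (real n * ln (real n + 1)))"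
proof
  assume S: "summable (\<lambda>n. inverse (real n * ln (real n + 1)))"
  define f where "f n = inverse (real n * ln (real n + 1))" for n
  have mono: "f (Suc m) \<le> f m" if "0 < m" for m
  proof -
    have h1: "0 < real m * ln (real m + 1)" using that by auto
    have "real m * ln (real m + 1) \<le> real (Suc m) * ln (real (Suc m) + 1)"
      by (intro mult_mono) auto
    then show ?thesis unfolding f_def using h1 by (intro le_imp_inverse_le) auto
  qed
  have nn: "f n \<ge> 0" for n unfolding f_def by auto
  from S have S2: "summable (\<lambda>n. 2^n * f (2^n))"
    using condensation_test[of f, OF mono nn] unfolding f_def by auto
  have cmp: "norm (inverse (real (Suc n) * ln 2)) \<le> 2^n * f (2^n)" for n
  proof -
    have one: "(1::real) \<le> 2^n" by simp
    then have "(2::real)^n + 1 \<le> 2^(Suc n)" by simp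
    moreover have "(0::real) < 2^n + 1" using one by linarith
    ultimately have "ln (2^n + 1) \<le> ln ((2::real)^Suc n)" by (intro ln_mono) auto
    also have "\<dots> = real (Suc n) * ln 2" by (rule ln_realpow)
    finally have L: "ln (2^n + 1) \<le> real (Suc n) * ln 2" .
    have "1 < (2::real)^n + 1" using one by linarith
    then have L0: "0 < ln ((2::real)^n + 1)" by (intro ln_gt_zero)
    have "2^n * f (2^n) = inverse (ln (2^n + 1))" unfolding f_def by (simp add: field_simps)
    moreover have "inverse (real (Suc n) * ln 2) \<le> inverse (ln (2^n + 1))"
      using L L0 by (intro le_imp_inverse_le) auto
    ultimately show ?thesis by simp
  qed
  have "summable (\<lambda>n. inverse (real (Suc n) * ln 2))"
    using summable_comparison_test'[where N=0, OF S2 cmp] .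
  then have S3: "summable (\<lambda>n. ln 2 * inverse (real (Suc n) * ln 2))" by (rule summable_mult)
  have eqf: "(\<lambda>n. ln 2 * inverse (real (Suc n) * ln 2)) = (\<lambda>n. inverse (real (Suc n)))"
    by (rule ext) (simp add: inverse_mult_distrib mult.left_commute)
  have "summable (\<lambda>n. inverse (real (Suc n)))" using S3 unfolding eqf .
  then have "summable (\<lambda>n. inverse (real n))"
    using summable_Suc_iff[of "\<lambda>n. inverse (real n)"] by simp
  then show False using not_summable_harmonic by blast
qed

theorem corollary2p1p2:
  fixes a :: "nat \<Rightarrow> real" and \<gamma> :: "nat \<Rightarrow> real" and \<beta> p :: real
  assumes pos: "\<And>n. n \<ge> 1 \<Longrightarrow> a n > 0"
    and mono: "\<And>m n. 1 \<le> m \<Longrightarrow> m \<le> n \<Longrightarrow> a n \<le> a m"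
    and p: "p > 1"
    and bdd: "\<exists>C. \<forall>n\<ge>2. \<bar>\<gamma> n\<bar> \<le> C"
    and ratio: "\<And>n. n \<ge> 2 \<Longrightarrow>
        a (2 * n) / a n = 1 / 2 - \<beta> / ln (real n) + \<gamma> n / (ln (real n)) powr p"
  shows "(\<beta> > ln 2 / 2 \<longrightarrow> summable (\<lambda>n. a (n + 1)))
       \<and> (\<beta> \<le> ln 2 / 2 \<longrightarrow> \<not> summable (\<lambda>n. a (n + 1)))"
proof -
  obtain C0 where C0: "\<forall>n\<ge>2. \<bar>\<gamma> n\<bar> \<le> C0" using bdd by blast
  define C where "C = max C0 0"
  have C: "\<bar>\<gamma> n\<bar> \<le> C" if "n \<ge> 2" for n using C0 that unfolding C_def by force
  have C_nn: "C \<ge> 0" unfolding C_def by simp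
  define b where "b k = 2^k * a (2^k)" for k
  define c where "c = 2 * \<beta> / ln 2"
  define e where "e k = 2 * \<gamma> (2^k) / (real k * ln 2) powr p" for k
  define r where "r k = b (Suc k) / b k" for k
  define x where "x k = real k * (1 - r k)" for k
  define D where "D = 2 * C / (ln 2) powr p"
  have bpos: "b k > 0" for k unfolding b_def using pos[of "2^k"] by simp
  have rk: "r k = 1 - c / real k + e k" if k: "k \<ge> 1" for k
  proof -
    have n2: "(2::nat)^k \<ge> 2" using k by (metis power_one_right power_increasing_iff one_less_numeral_iff semiring_norm(76))
    have lnk: "ln (real (2^k)) = real k * ln 2" by (simp add: ln_realpow)
    have "r k = 2 * (a (2 * 2^k) / a (2^k))" unfolding r_def b_def using pos[of "2^k"]
      by (simp add: field_simps)
    also have "\<dots> = 2 * (1 / 2 - \<beta> / ln (real (2^k)) + \<gamma> (2^k) / (ln (real (2^k))) powr p)"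
      using ratio[OF n2] by simp
    also have "\<dots> = 1 - c / real k + e k" unfolding lnk c_def e_def using k
      by (simp add: field_simps)
    finally show ?thesis .
  qed
  have xk: "x k = c - real k * e k" if "k \<ge> 1" for k
    using rk[OF that] that unfolding x_def by (simp add: field_simps)
  have kebound: "norm (real k * e k) \<le> D * real k powr (1 - p)" if k: "k \<ge> 1" for k
  proof -
    have n2: "(2::nat)^k \<ge> 2" using k by (metis power_one_right power_increasing_iff one_less_numeral_iff semiring_norm(76))
    have kp: "real k > 0" using k by simp
    have "real k * e k = 2 * \<gamma> (2^k) / (ln 2) powr p * (real k / real k powr p)"
      unfolding e_def using kp by (simp add: powr_mult field_simps)
    also have "real k / real k powr p = real k powr (1 - p)" using kp by (simp add: powr_diff)
    finally have eq: "real k * e k = 2 * \<gamma> (2^k) / (ln 2) powr p * real k powr (1 - p)" .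
    have "norm (real k * e k) = 2 * \<bar>\<gamma> (2^k)\<bar> / (ln 2) powr p * real k powr (1 - p)"
      unfolding eq by (simp add: abs_mult)
    also have "\<dots> \<le> D * real k powr (1 - p)" unfolding D_def
      using C[OF n2] by (intro mult_right_mono divide_right_mono) auto
    finally show ?thesis .
  qed
  have ke0: "(\<lambda>k. real k * e k) \<longlonglongrightarrow> 0"
  proof (rule Lim_null_comparison)
    show "\<forall>\<^sub>F k in sequentially. norm (real k * e k) \<le> D * real k powr (1 - p)"
      using eventually_ge_at_top[of "1::nat"] by eventually_elim (rule kebound)
    show "(\<lambda>k. D * real k powr (1 - p)) \<longlonglongrightarrow> 0" using p by real_asymp
  qed
  have lnke0: "(\<lambda>k. ln (real k + 1) * (real k * e k)) \<longlonglongrightarrow> 0"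
  proof (rule Lim_null_comparison)
    show "\<forall>\<^sub>F k in sequentially. norm (ln (real k + 1) * (real k * e k)) \<le> D * (ln (real k + 1) * real k powr (1 - p))"
      using eventually_ge_at_top[of "1::nat"]
    proof (rule eventually_mono)
      fix k :: nat assume k: "k \<ge> 1"
      have "norm (ln (real k + 1) * (real k * e k)) = ln (real k + 1) * norm (real k * e k)"
        by (simp add: abs_mult)
      also have "\<dots> \<le> ln (real k + 1) * (D * real k powr (1 - p))"
        using kebound[OF k] by (intro mult_left_mono) auto
      finally show "norm (ln (real k + 1) * (real k * e k)) \<le> D * (ln (real k + 1) * real k powr (1 - p))"
        by (simp add: mult_ac)
    qed
    show "(\<lambda>k. D * (ln (real k + 1) * real k powr (1 - p))) \<longlonglongrightarrow> 0" using p by real_asymp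
  qed
  have xlim: "x \<longlonglongrightarrow> c"
  proof -
    have "(\<lambda>k. c - real k * e k) \<longlonglongrightarrow> c - 0" by (intro tendsto_intros ke0)
    then have "(\<lambda>k. c - real k * e k) \<longlonglongrightarrow> c" by simp
    then show ?thesis
      by (rule Lim_transform_eventually)
         (use eventually_ge_at_top[of "1::nat"] in \<open>eventually_elim, use xk in simp\<close>)
  qed
  have inv0: "(\<lambda>k. 1 / real k) \<longlonglongrightarrow> 0" by real_asymp
  have rlim: "r \<longlonglongrightarrow> 1"
  proof -
    have "(\<lambda>k. 1 - x k * (1 / real k)) \<longlonglongrightarrow> 1 - c * 0" by (intro tendsto_intros xlim inv0)
    then have "(\<lambda>k. 1 - x k * (1 / real k)) \<longlonglongrightarrow> 1" by simp
    then show ?thesis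
      by (rule Lim_transform_eventually)
         (use eventually_ge_at_top[of "1::nat"] in \<open>eventually_elim, simp add: x_def\<close>)
  qed
  have rpos: "r k > 0" for k unfolding r_def using bpos[of k] bpos[of "Suc k"] by simp
  have raabe: "(\<lambda>k. real k * (b k / b (Suc k) - 1)) \<longlonglongrightarrow> c"
  proof -
    have "(\<lambda>k. x k / r k) \<longlonglongrightarrow> c / 1" by (intro tendsto_intros xlim rlim) simp
    moreover have "x k / r k = real k * (b k / b (Suc k) - 1)" for k
      using bpos[of k] bpos[of "Suc k"] unfolding x_def r_def by (simp add: field_simps)
    ultimately show ?thesis by simp
  qed
  have raabe_ereal: "(\<lambda>k. ereal (real k * (b k / b (Suc k) - 1))) \<longlonglongrightarrow> ereal c"
    using raabe by (rule tendsto_ereal)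
  have liminf: "liminf (\<lambda>k. ereal (real k * (b k / b (Suc k) - 1))) = ereal c"
    using lim_imp_Liminf[OF sequentially_bot raabe_ereal] .
  have limsup: "limsup (\<lambda>k. ereal (real k * (b k / b (Suc k) - 1))) = ereal c"
    using lim_imp_Limsup[OF sequentially_bot raabe_ereal] .
  define f where "f n = (if n = 0 then 0 else a n)" for n
  have fmono: "f (Suc m) \<le> f m" if "0 < m" for m unfolding f_def using that mono[of m "Suc m"] by auto
  have fnn: "f n \<ge> 0" for n unfolding f_def using pos[of n] by auto
  have "summable (\<lambda>n. a (n + 1)) \<longleftrightarrow> summable (\<lambda>n. f (Suc n))" unfolding f_def by simp
  also have "\<dots> \<longleftrightarrow> summable f" by (rule summable_Suc_iff)
  also have "\<dots> \<longleftrightarrow> summable (\<lambda>n. 2^n * f (2^n))" by (rule condensation_test) (use fmono fnn in auto)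
  also have "(\<lambda>n. 2^n * f (2^n)) = b" unfolding f_def b_def by auto
  finally have equiv: "summable (\<lambda>n. a (n + 1)) \<longleftrightarrow> summable b" .
  have bpos_ev: "eventually (\<lambda>k. b k > 0) sequentially" using bpos by simp
  have ln2: "ln (2::real) > 0" by simp
  have part1: "summable b" if "\<beta> > ln 2 / 2"
  proof -
    have "c > 1" unfolding c_def using that ln2 by (simp add: field_simps)
    then show ?thesis using raabes_test_convergence[OF bpos_ev] liminf by simp
  qed
  have part2: "\<not> summable b" if "\<beta> < ln 2 / 2"
  proof -
    have "c < 1" unfolding c_def using that ln2 by (simp add: field_simps)
    then show ?thesis using raabes_test_divergence[OF bpos_ev] limsup by simp
  qed
  have part3: "\<not> summable b" if "\<beta> = ln 2 / 2"
  proof -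
    have c1: "c = 1" unfolding c_def using that ln2 by (simp add: field_simps)
    define P where "P k = real k * ln (real k + 1)" for k
    define E where "E k = P k * b k / b (Suc k) - P (Suc k)" for k
    have E_eq: "E k = (real k * ln (real k + 1) + ln (real k + 1) - (real k + 1) * ln (real k + 2))
        + (ln (real k + 1) / real k) * x k / r k - ln (real k + 1) * (real k * e k) / r k"
      if k: "k \<ge> 1" for k
    proof -
      have x1: "x k = 1 - real k * e k" using xk[OF k] c1 by simp
      have x2: "x k = real k * (1 - r k)" by (simp add: x_def)
      have bb: "b k / b (Suc k) = 1 / r k" unfolding r_def by simp
      have rr: "r k \<noteq> 0" using rpos[of k] by simp
      have kk: "real k \<noteq> 0" using k by simp
      have s: "real (Suc k) + 1 = real k + 2" by simp
      have "E k = real k * ln (real k + 1) / r k - (real k + 1) * ln (real k + 2)"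
        unfolding E_def P_def using bpos[of k] bpos[of "Suc k"] s
        by (simp add: r_def field_simps)
      also have "\<dots> = (real k * ln (real k + 1) + ln (real k + 1) - (real k + 1) * ln (real k + 2))
        + (ln (real k + 1) / real k) * x k / r k - ln (real k + 1) * (real k * e k) / r k"
      proof -
        have ke: "real k * e k = 1 - real k * (1 - r k)" using x1 x2 by simp
        show ?thesis unfolding ke x2 using rr kk by (simp add: field_simps)
      qed
      finally show ?thesis .
    qed
    have Elim: "E \<longlonglongrightarrow> -1 + 0 * 1 / 1 - 0 / 1"
    proof -
      have A: "(\<lambda>k. real k * ln (real k + 1) + ln (real k + 1) - (real k + 1) * ln (real k + 2)) \<longlonglongrightarrow> -1"
        by real_asymp
      have B: "(\<lambda>k. ln (real k + 1) / real k) \<longlonglongrightarrow> 0" by real_asymp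
      have "(\<lambda>k. (real k * ln (real k + 1) + ln (real k + 1) - (real k + 1) * ln (real k + 2))
        + (ln (real k + 1) / real k) * x k / r k - ln (real k + 1) * (real k * e k) / r k)
         \<longlonglongrightarrow> -1 + 0 * 1 / 1 - 0 / 1"
        using xlim c1 by (intro tendsto_intros A B rlim lnke0) auto
      then show ?thesis
        by (rule Lim_transform_eventually)
           (use eventually_ge_at_top[of "1::nat"] in \<open>eventually_elim, use E_eq in simp\<close>)
    qed
    then have "(\<lambda>k. ereal (E k)) \<longlonglongrightarrow> ereal (-1)" by (intro tendsto_ereal) simp
    then have ls: "limsup (\<lambda>k. ereal (E k)) = ereal (-1)"
      using lim_imp_Limsup[OF sequentially_bot] by blast
    have Ppos: "eventually (\<lambda>k. P k > 0) sequentially"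
      using eventually_ge_at_top[of "1::nat"] by eventually_elim (simp add: P_def)
    have Pdiv: "\<not> summable (\<lambda>k. inverse (P k))" unfolding P_def by (rule not_summable_bertrand)
    show ?thesis
      by (rule kummers_test_divergence[OF bpos_ev Ppos Pdiv]) (use ls in \<open>simp add: E_def\<close>)
  qed
  show ?thesis using equiv part1 part2 part3 by (auto simp: not_less order.order_iff_strict)
qed

end
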